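(* For all positive integers $r,s,k$ with $1\le r,s\le k$, $$\sum_{n\ge0}\mathrm{GF}\big(\mathcal A_{2n+1}^{(k)}(r\to s);w_{AV}\big)x^{2n}=\begin{cases}(-1)^{r+s+1}V_rV_s\dfrac{xQ_{2r-2}(x)\,T_{AV}^{s-1}R_{AV}^{(k-s+1)}Q_{2k+1-2s}(x)}{Q_{2k}(x)},&r<s,\\[2mm] V_r-V_r^2\dfrac{xQ_{2r-2}(x)\,T_{AV}^{r-1}R_{AV}^{(k-r+1)}Q_{2k+1-2r}(x)}{Q_{2k}(x)},&r=s,\\[2mm] (-1)^{r+s+1}V_rV_s\dfrac{xQ_{2s-2}(x)\,T_{AV}^{r-1}R_{AV}^{(k-r+1)}Q_{2k+1-2r}(x)}{Q_{2k}(x)},&r>s,\end{cases}$$ and $$\sum_{n\ge0}\mathrm{GF}\big(\mathcal A_{2n+2}^{(k)}(r\to s);w_{AV}\big)x^{2n+1}=\begin{cases}(-1)^{r+s+1}V_rA_s\dfrac{xQ_{2r-2}(x)\,T_{AV}^{s}Q_{2k-2s}(x)}{Q_{2k}(x)},&r\le s,\\[2mm] (-1)^{r+s+1}V_rA_s\dfrac{xQ_{2s-1}(x)\,T_{AV}^{r-1}R_{AV}^{(k-r+1)}Q_{2k+1-2r}(x)}{Q_{2k}(x)},&r>s.\end{cases}$$ Here $T_{AV}^{a}R_{AV}^{(b)}Q(x)$ means: first apply $R_{AV}^{(b)}$ to $Q(x)$, then apply $T_{AV}^{a}$.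
   Context: $\mathcal A_n^{(k)}(r\to s)$ is the set of integer sequences $(a_1,\dots,a_n)$ with $a_1=r$, $a_n=s$, $1\le a_i\le k$, and $a_1\le a_2\ge a_3\le a_4\ge\cdots$ (i.e. $a_{2j-1}\le a_{2j}$, $a_{2j}\ge a_{2j+1}$ whenever defined). Let $A_1,A_2,\dots,V_1,V_2,\dots$ be indeterminates; the weight of a sequence is $w_{AV}(a_1,\dots,a_n)=\prod_{i=1}^{\lfloor n/2\rfloor}A_{a_{2i}}\prod_{i=1}^{\lceil n/2\rceil}V_{a_{2i-1}}$, and $\mathrm{GF}(\mathcal O;w)=\sum_{t\in\mathcal O}w(t)$. Polynomials $Q_n(x)$: $Q_0=1$, $Q_1=V_1x$, and for $n\ge1$, $Q_{n+1}(x)=V_{(n+2)/2}\,xQ_n(x)-Q_{n-1}(x)$ if $n$ is even, $Q_{n+1}(x)=A_{(n+1)/2}\,xQ_n(x)-Q_{n-1}(x)$ if $n$ is odd. $T_{AV}$ replaces each $A_i$ by $A_{i+1}$ and each $V_i$ by $V_{i+1}$; $R_{AV}^{(j)}$ replaces each $A_i$ by $V_{j+1-i}$ and each $V_i$ by $A_{j+1-i}$. *)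

theory Defs
  imports "HOL-Computational_Algebra.Computational_Algebra"
begin

(* The indeterminates A_1, A_2, ..., V_1, V_2, ... are modelled by arbitrary
   families A V :: nat => 'a in an arbitrary commutative ring 'a (index 0 unused). *)

(* Alternating sequences A_n^(k)(r -> s), as lists; xs ! (i-1) is a_i. *)
definition altseq :: "nat \<Rightarrow> nat \<Rightarrow> nat \<Rightarrow> nat \<Rightarrow> nat list set" where
  "altseq k n r s = {xs. length xs = n \<and> n \<ge> 1 \<and> xs ! 0 = r \<and> xs ! (n - 1) = s
      \<and> (\<forall>i<n. 1 \<le> xs ! i \<and> xs ! i \<le> k)
      \<and> (\<forall>j. 1 \<le> j \<longrightarrow> 2 * j \<le> n \<longrightarrow> xs ! (2*j - 2) \<le> xs ! (2*j - 1))
      \<and> (\<forall>j. 1 \<le> j \<longrightarrow> 2 * j + 1 \<le> n \<longrightarrow> xs ! (2*j - 1) \<ge> xs ! (2*j))}"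

definition wAV :: "(nat \<Rightarrow> 'a::comm_ring_1) \<Rightarrow> (nat \<Rightarrow> 'a) \<Rightarrow> nat list \<Rightarrow> 'a" where
  "wAV A V xs = (\<Prod>i=1..length xs div 2. A (xs ! (2*i - 1)))
              * (\<Prod>i=1..(length xs + 1) div 2. V (xs ! (2*i - 2)))"

definition GF :: "nat list set \<Rightarrow> (nat list \<Rightarrow> 'a::comm_ring_1) \<Rightarrow> 'a" where
  "GF S w = (\<Sum>t\<in>S. w t)"

fun Qp :: "(nat \<Rightarrow> 'a::comm_ring_1) \<Rightarrow> (nat \<Rightarrow> 'a) \<Rightarrow> nat \<Rightarrow> 'a poly" where
  "Qp A V 0 = 1"
| "Qp A V (Suc 0) = [:0, V 1:]"
| "Qp A V (Suc (Suc n)) =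
     smult (if even (Suc n) then V ((Suc n + 2) div 2) else A ((Suc n + 1) div 2))
       ([:0, 1:] * Qp A V (Suc n)) - Qp A V n"

(* T_AV^a Q_m : substitute A_i -> A_{i+a}, V_i -> V_{i+a} *)
definition QT :: "nat \<Rightarrow> (nat \<Rightarrow> 'a::comm_ring_1) \<Rightarrow> (nat \<Rightarrow> 'a) \<Rightarrow> nat \<Rightarrow> 'a poly" where
  "QT a A V m = Qp (\<lambda>i. A (i + a)) (\<lambda>i. V (i + a)) m"

(* T_AV^a R_AV^(j) Q_m : first A_i -> V_{j+1-i}, V_i -> A_{j+1-i}, then shift by a,
   i.e. A_i -> V_{j+1-i+a}, V_i -> A_{j+1-i+a}.  (Only indices i <= j occur
   in the uses below, so the truncated subtraction is harmless.) *)
definition QTR :: "nat \<Rightarrow> nat \<Rightarrow> (nat \<Rightarrow> 'a::comm_ring_1) \<Rightarrow> (nat \<Rightarrow> 'a) \<Rightarrow> nat \<Rightarrow> 'a poly" where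
  "QTR a j A V m = Qp (\<lambda>i. V (j + 1 - i + a)) (\<lambda>i. A (j + 1 - i + a)) m"

end

theory Submission imports Defs begin


definition lx :: "'a::comm_ring_1 \<Rightarrow> 'a poly" where "lx a = [:0, a:]"

fun cont :: "(nat \<Rightarrow> 'a::comm_ring_1) \<Rightarrow> nat \<Rightarrow> 'a poly" where
  "cont d 0 = 1"
| "cont d (Suc 0) = lx (d 1)"
| "cont d (Suc (Suc n)) = lx (d (Suc (Suc n))) * cont d (Suc n) - cont d n"

lemma cont_cong: "(\<And>i. 1 \<le> i \<Longrightarrow> i \<le> n \<Longrightarrow> d i = e i) \<Longrightarrow> cont d n = cont e n"
proof (induction d n rule: cont.induct)
  case (3 d n)
  have "cont d (Suc n) = cont e (Suc n)" "cont d n = cont e n" using 3 by auto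
  moreover have "d (Suc (Suc n)) = e (Suc (Suc n))" using 3 by auto
  ultimately show ?case by simp
qed auto

lemma cont_back: "cont d (Suc (Suc n)) =
   lx (d 1) * cont (\<lambda>i. d (i+1)) (Suc n) - cont (\<lambda>i. d (i+2)) n"
proof (induction n arbitrary: d rule: nat_less_induct)
  case (1 n)
  show ?case
  proof (cases n)
    case 0 then show ?thesis by (simp add: algebra_simps)
  next
    case (Suc m)
    show ?thesis
    proof (cases m)
      case 0 then show ?thesis using Suc by (simp add: algebra_simps)
    next
      case (Suc j)
      note IH = "1"[rule_format]
      have IH1: "cont d (Suc (Suc (Suc j))) = lx (d 1) * cont (\<lambda>i. d (i+1)) (Suc (Suc j)) - cont (\<lambda>i. d (i+2)) (Suc j)"
        by (rule IH) (simp add: Suc \<open>n = Suc m\<close>)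
      have IH2: "cont d (Suc (Suc j)) = lx (d 1) * cont (\<lambda>i. d (i+1)) (Suc j) - cont (\<lambda>i. d (i+2)) j"
        by (rule IH) (simp add: Suc \<open>n = Suc m\<close>)
      have e: "cont d (Suc (Suc (Suc (Suc j)))) = lx (d (Suc (Suc (Suc (Suc j))))) * cont d (Suc (Suc (Suc j))) - cont d (Suc (Suc j))"
        by simp
      have e1: "cont (\<lambda>i. d (i+1)) (Suc (Suc (Suc j))) = lx (d (Suc (Suc (Suc (Suc j))))) * cont (\<lambda>i. d (i+1)) (Suc (Suc j)) - cont (\<lambda>i. d (i+1)) (Suc j)"
        by simp
      have e2: "cont (\<lambda>i. d (i+2)) (Suc (Suc j)) = lx (d (Suc (Suc (Suc (Suc j))))) * cont (\<lambda>i. d (i+2)) (Suc j) - cont (\<lambda>i. d (i+2)) j"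
        by (simp add: numeral_2_eq_2)
      show ?thesis unfolding \<open>n = Suc m\<close> Suc e e1 e2 IH1 IH2 by (simp add: algebra_simps)
    qed
  qed
qed

lemma cont_rev: "cont (\<lambda>i. d (n+1-i)) n = cont d n"
proof (induction n arbitrary: d rule: nat_less_induct)
  case (1 n)
  show ?case
  proof (cases n)
    case 0 then show ?thesis by simp
  next
    case (Suc m)
    show ?thesis
    proof (cases m)
      case 0 then show ?thesis using Suc by simp
    next
      case (Suc j)
      have a: "cont (\<lambda>i. d (n+1-i)) (Suc j) = cont (\<lambda>i. d (i+1)) (Suc j)"
      proof -
        have "cont (\<lambda>i. d (n+1-i)) (Suc j) = cont (\<lambda>i. (\<lambda>i. d (i+1)) (Suc j+1-i)) (Suc j)"
          by (rule cont_cong) (use Suc \<open>n = Suc m\<close> in \<open>auto simp: Suc_diff_le\<close>)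
        also have "\<dots> = cont (\<lambda>i. d (i+1)) (Suc j)" using "1"[rule_format, of "Suc j" "\<lambda>i. d (i+1)"] Suc \<open>n = Suc m\<close> by simp
        finally show ?thesis .
      qed
      have b: "cont (\<lambda>i. d (n+1-i)) j = cont (\<lambda>i. d (i+2)) j"
      proof -
        have "cont (\<lambda>i. d (n+1-i)) j = cont (\<lambda>i. (\<lambda>i. d (i+2)) (j+1-i)) j"
          by (rule cont_cong) (use Suc \<open>n = Suc m\<close> in \<open>auto simp: Suc_diff_le\<close>)
        also have "\<dots> = cont (\<lambda>i. d (i+2)) j" using "1"[rule_format, of j "\<lambda>i. d (i+2)"] Suc \<open>n = Suc m\<close> by simp
        finally show ?thesis .
      qed
      have "cont (\<lambda>i. d (n+1-i)) n = lx (d 1) * cont (\<lambda>i. d (n+1-i)) (Suc j) - cont (\<lambda>i. d (n+1-i)) j"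
        using Suc \<open>n = Suc m\<close> by simp
      also have "\<dots> = cont d n" unfolding a b using cont_back[of d j] Suc \<open>n = Suc m\<close> by simp
      finally show ?thesis .
    qed
  qed
qed

lemma cont_split_aux:
  "\<forall>p. 1 \<le> p \<longrightarrow> p + q + 1 = n \<longrightarrow>
     cont d n = cont d p * cont (\<lambda>i. d (i+p)) (n-p) - cont d (p-1) * cont (\<lambda>i. d (i+(p+1))) (n-(p+1))"
proof (induction q)
  case 0
  show ?case
  proof (intro allI impI)
    fix p assume p: "1 \<le> p" "p + 0 + 1 = n"
    then obtain j where j: "p = Suc j" by (cases p) auto
    have "n = Suc (Suc j)" using p j by simp
    then show "cont d n = cont d p * cont (\<lambda>i. d (i+p)) (n-p) - cont d (p-1) * cont (\<lambda>i. d (i+(p+1))) (n-(p+1))"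
      using j by (simp add: algebra_simps)
  qed
next
  case (Suc q)
  show ?case
  proof (intro allI impI)
    fix p assume p: "1 \<le> p" "p + Suc q + 1 = n"
    have IH: "cont d n = cont d (p+1) * cont (\<lambda>i. d (i+(p+1))) (n-(p+1)) - cont d p * cont (\<lambda>i. d (i+(p+2))) (n-(p+2))"
      using Suc.IH[rule_format, of "p+1"] p by (simp add: add.assoc)
    obtain j where j: "p = Suc j" using p by (cases p) auto
    have Lp: "cont d (p+1) = lx (d (p+1)) * cont d p - cont d (p-1)" using j by simp
    define m where "m = n - p - 2"
    have m: "n - p = Suc (Suc m)" using p by (simp add: m_def)
    have Tp: "cont (\<lambda>i. d (i+p)) (n-p) = lx (d (p+1)) * cont (\<lambda>i. d (i+(p+1))) (n-(p+1)) - cont (\<lambda>i. d (i+(p+2))) (n-(p+2))"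
    proof -
      have "cont (\<lambda>i. d (i+p)) (n-p) = lx (d (1+p)) * cont (\<lambda>i. d (i+1+p)) (Suc m) - cont (\<lambda>i. d (i+2+p)) m"
        unfolding m by (rule cont_back)
      moreover have "n-(p+1) = Suc m" "n-(p+2) = m" using m by auto
      ultimately show ?thesis by (simp add: ac_simps)
    qed
    show "cont d n = cont d p * cont (\<lambda>i. d (i+p)) (n-p) - cont d (p-1) * cont (\<lambda>i. d (i+(p+1))) (n-(p+1))"
      unfolding IH Lp Tp by (simp add: algebra_simps)
  qed
qed

lemma cont_split:
  assumes "1 \<le> p" "p < n"
  shows "cont d n = cont d p * cont (\<lambda>i. d (i+p)) (n-p) - cont d (p-1) * cont (\<lambda>i. d (i+(p+1))) (n-(p+1))"
  using cont_split_aux[of "n - p - 1" n d] assms by auto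


lemma altseq_finite: "finite (altseq k n r s)"
proof -
  have "altseq k n r s \<subseteq> {xs. set xs \<subseteq> {0..k} \<and> length xs = n}"
  proof
    fix xs assume "xs \<in> altseq k n r s"
    then have "length xs = n" "\<forall>i<n. xs ! i \<le> k" unfolding altseq_def by auto
    then show "xs \<in> {xs. set xs \<subseteq> {0..k} \<and> length xs = n}"
      by (auto simp: in_set_conv_nth)
  qed
  moreover have "finite {xs. set xs \<subseteq> {0..k} \<and> length xs = (n::nat)}"
    by (rule finite_lists_length_eq) simp
  ultimately show ?thesis by (rule finite_subset)
qed

lemma altseq_1: "1 \<le> r \<Longrightarrow> r \<le> k \<Longrightarrow> altseq k 1 r s = (if r = s then {[r]} else {})"
  unfolding altseq_def by (auto simp: length_Suc_conv)

lemma GF_1: "1 \<le> r \<Longrightarrow> r \<le> k \<Longrightarrow> GF (altseq k 1 r s) (wAV A V) = (if r = s then V r else 0)"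
  unfolding GF_def using altseq_1[of r k s] by (simp add: wAV_def)

lemma wAV_snoc:
  assumes "length xs = n"
  shows "wAV A V (xs @ [a]) = wAV A V xs * (if even n then V a else A a)"
proof (cases "even n")
  case True
  have h1: "(Suc n) div 2 = n div 2" "(Suc n + 1) div 2 = Suc (n div 2)" "(n+1) div 2 = n div 2"
    using True by presburger+
  have pa: "(\<Prod>i=Suc 0..n div 2. A ((xs@[a]) ! (2*i - Suc 0))) = (\<Prod>i=Suc 0..n div 2. A (xs ! (2*i - Suc 0)))"
    by (rule prod.cong) (use True assms in \<open>auto simp: nth_append\<close>)
  have pv: "(\<Prod>i=Suc 0..n div 2. V ((xs@[a]) ! (2*i - 2))) = (\<Prod>i=Suc 0..n div 2. V (xs ! (2*i - 2)))"
    by (rule prod.cong) (use True assms in \<open>auto simp: nth_append\<close>)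
  have la: "(xs@[a]) ! (2 * Suc (n div 2) - 2) = a" using True assms by (simp add: nth_append)
  have la2: "(xs@[a]) ! n = a" unfolding assms[symmetric] by simp
  show ?thesis unfolding wAV_def using assms True by (simp add: h1 pa pv la la2 mult.assoc)
next
  case False
  have h1: "(Suc n) div 2 = Suc (n div 2)" "(Suc n + 1) div 2 = Suc (n div 2)" "(n+1) div 2 = Suc (n div 2)"
    using False by presburger+
  have pa: "(\<Prod>i=Suc 0..n div 2. A ((xs@[a]) ! (2*i - Suc 0))) = (\<Prod>i=Suc 0..n div 2. A (xs ! (2*i - Suc 0)))"
    by (rule prod.cong) (use False assms in \<open>auto simp: nth_append\<close>)
  have pv: "(\<Prod>i=Suc 0..n div 2. V ((xs@[a]) ! (2*i - 2))) = (\<Prod>i=Suc 0..n div 2. V (xs ! (2*i - 2)))"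
    by (rule prod.cong) (use False assms in \<open>auto simp: nth_append elim!: oddE\<close>)
  have la2: "(xs@[a]) ! n = a" unfolding assms[symmetric] by simp
  have la3: "(xs@[a]) ! (n - Suc 0) = xs ! (n - Suc 0)" using False assms by (auto simp: nth_append elim!: oddE)
  have la: "(xs@[a]) ! (2 * Suc (n div 2) - 1) = a" using False assms by (simp add: nth_append)
  show ?thesis unfolding wAV_def using assms False by (simp add: h1 pa pv la la2 la3)
qed


lemma altseq_snoc:
  assumes n: "1 \<le> n" and s: "1 \<le> s" "s \<le> k"
  shows "altseq k (Suc n) r s = (\<lambda>xs. xs @ [s]) ` (\<Union>t\<in>(if even n then {s..k} else {1..s}). altseq k n r t)"
proof (rule set_eqI, rule iffI)
  fix ys assume ys: "ys \<in> altseq k (Suc n) r s"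
  define xs where "xs = take n ys"
  define t where "t = ys ! (n-1)"
  from ys have len: "length ys = Suc n" and y0: "ys!0 = r" and yn: "ys ! n = s"
   and bnd: "\<forall>i<Suc n. 1 \<le> ys!i \<and> ys!i \<le> k"
   and c1: "\<forall>j. 1 \<le> j \<longrightarrow> 2*j \<le> Suc n \<longrightarrow> ys!(2*j-2) \<le> ys!(2*j-1)"
   and c2: "\<forall>j. 1 \<le> j \<longrightarrow> 2*j+1 \<le> Suc n \<longrightarrow> ys!(2*j-1) \<ge> ys!(2*j)"
    unfolding altseq_def mem_Collect_eq by simp_all
  have yeq: "ys = xs @ [s]"
    using take_Suc_conv_app_nth[of n ys] len yn by (simp add: xs_def)
  have xnth: "\<And>i. i < n \<Longrightarrow> xs!i = ys!i" by (simp add: xs_def)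
  have lx: "length xs = n" using len by (simp add: xs_def)
  have b1: "\<forall>i<n. 1 \<le> xs!i \<and> xs!i \<le> k" using bnd xnth by auto
  have b2: "\<forall>j. 1 \<le> j \<longrightarrow> 2*j \<le> n \<longrightarrow> xs!(2*j-2) \<le> xs!(2*j-1)"
  proof (intro allI impI)
    fix j :: nat assume j: "1 \<le> j" "2*j \<le> n"
    then have "xs!(2*j-2) = ys!(2*j-2)" "xs!(2*j-1) = ys!(2*j-1)" using xnth by auto
    then show "xs!(2*j-2) \<le> xs!(2*j-1)" using c1 j by simp
  qed
  have b3: "\<forall>j. 1 \<le> j \<longrightarrow> 2*j+1 \<le> n \<longrightarrow> xs!(2*j-1) \<ge> xs!(2*j)"
  proof (intro allI impI)
    fix j :: nat assume j: "1 \<le> j" "2*j+1 \<le> n"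
    then have "xs!(2*j) = ys!(2*j)" "xs!(2*j-1) = ys!(2*j-1)" using xnth by auto
    then show "xs!(2*j-1) \<ge> xs!(2*j)" using c2 j by simp
  qed
  have x0: "xs!0 = r" using xnth[of 0] n y0 by simp
  have xl: "xs!(n-1) = t" using xnth[of "n-1"] n by (simp add: t_def)
  have xs_in: "xs \<in> altseq k n r t"
    unfolding altseq_def mem_Collect_eq by (intro conjI lx n b1 b2 b3 x0 xl)
  have t_in: "t \<in> (if even n then {s..k} else {1..s})"
  proof (cases "even n")
    case True
    then obtain j where j: "n = 2*j" by (elim evenE)
    have "1 \<le> j" using j n by simp
    then have "ys!(2*j-1) \<ge> ys!(2*j)" using c2 j by simp
    then have "t \<ge> s" using j yn by (simp add: t_def)
    moreover have "t \<le> k" using bnd n by (simp add: t_def)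
    ultimately show ?thesis using True by simp
  next
    case False
    then obtain j where j: "n = 2*j+1" by (elim oddE)
    have "ys!(2*(j+1)-2) \<le> ys!(2*(j+1)-1)" by (rule c1[rule_format]) (use j in simp_all)
    then have "t \<le> s" using j yn by (simp add: t_def)
    moreover have "1 \<le> t" using bnd n by (simp add: t_def)
    ultimately show ?thesis using False by simp
  qed
  show "ys \<in> (\<lambda>xs. xs @ [s]) ` (\<Union>t\<in>(if even n then {s..k} else {1..s}). altseq k n r t)"
    using yeq xs_in t_in by (intro rev_image_eqI[of xs]) auto
next
  fix ys assume "ys \<in> (\<lambda>xs. xs @ [s]) ` (\<Union>t\<in>(if even n then {s..k} else {1..s}). altseq k n r t)"
  then obtain t xs where t: "t \<in> (if even n then {s..k} else {1..s})" and xs: "xs \<in> altseq k n r t"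
    and yeq: "ys = xs @ [s]" by auto
  from xs have lx: "length xs = n" and x0: "xs!0 = r" and xl: "xs!(n-1) = t"
   and bnd: "\<forall>i<n. 1 \<le> xs!i \<and> xs!i \<le> k"
   and c1: "\<forall>j. 1 \<le> j \<longrightarrow> 2*j \<le> n \<longrightarrow> xs!(2*j-2) \<le> xs!(2*j-1)"
   and c2: "\<forall>j. 1 \<le> j \<longrightarrow> 2*j+1 \<le> n \<longrightarrow> xs!(2*j-1) \<ge> xs!(2*j)"
    unfolding altseq_def mem_Collect_eq by simp_all
  have ynth: "\<And>i. i < n \<Longrightarrow> ys!i = xs!i" using lx by (simp add: yeq nth_append)
  have yn: "ys!n = s" using lx by (simp add: yeq nth_append)
  have len: "length ys = Suc n" using lx yeq by simp
  have y0: "ys!0 = r" using ynth[of 0] n x0 by simp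
  have yl: "ys!(Suc n - 1) = s" using yn by simp
  have b1: "\<forall>i<Suc n. 1 \<le> ys!i \<and> ys!i \<le> k"
  proof (intro allI impI)
    fix i assume "i < Suc n"
    then consider "i < n" | "i = n" by linarith
    then show "1 \<le> ys!i \<and> ys!i \<le> k"
    proof cases
      case 1 then show ?thesis using ynth bnd by simp
    next
      case 2 then show ?thesis using yn s by simp
    qed
  qed
  have b2: "\<forall>j. 1 \<le> j \<longrightarrow> 2*j \<le> Suc n \<longrightarrow> ys!(2*j-2) \<le> ys!(2*j-1)"
  proof (intro allI impI)
    fix j :: nat assume j: "1 \<le> j" "2*j \<le> Suc n"
    show "ys!(2*j-2) \<le> ys!(2*j-1)"
    proof (cases "2*j \<le> n")
      case True
      then have "ys!(2*j-2) = xs!(2*j-2)" "ys!(2*j-1) = xs!(2*j-1)" using ynth j by auto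
      then show ?thesis using c1 j True by simp
    next
      case False
      then have e: "2*j = Suc n" using j by simp
      then have "odd n" by presburger
      then have "t \<le> s" using t by simp
      moreover have "2*j-2 = n-1" "2*j-1 = n" using e by auto
      moreover have "ys!(n-1) = t" using ynth[of "n-1"] n xl by simp
      ultimately show ?thesis using yn by simp
    qed
  qed
  have b3: "\<forall>j. 1 \<le> j \<longrightarrow> 2*j+1 \<le> Suc n \<longrightarrow> ys!(2*j-1) \<ge> ys!(2*j)"
  proof (intro allI impI)
    fix j :: nat assume j: "1 \<le> j" "2*j+1 \<le> Suc n"
    show "ys!(2*j-1) \<ge> ys!(2*j)"
    proof (cases "2*j+1 \<le> n")
      case True
      then have "ys!(2*j) = xs!(2*j)" "ys!(2*j-1) = xs!(2*j-1)" using ynth j by auto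
      then show ?thesis using c2 j True by simp
    next
      case False
      then have e: "2*j = n" using j by simp
      then have "even n" by presburger
      then have "s \<le> t" using t by simp
      moreover have "2*j-1 = n-1" using e by auto
      moreover have "ys!(n-1) = t" using ynth[of "n-1"] n xl by simp
      ultimately show ?thesis using yn e by simp
    qed
  qed
  show "ys \<in> altseq k (Suc n) r s"
    unfolding altseq_def mem_Collect_eq by (intro conjI len y0 yl b1 b2 b3) simp
qed

lemma GF_snoc:
  assumes "1 \<le> n" "1 \<le> s" "s \<le> k"
  shows "GF (altseq k (Suc n) r s) (wAV A V) = (if even n then V s else A s) *
          (\<Sum>t\<in>(if even n then {s..k} else {1..s}). GF (altseq k n r t) (wAV A V))"
proof -
  define I where "I = (if even n then {s..k} else {1..(s::nat)})"
  define w where "w = (if even n then V s else A s)"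
  have inj: "inj_on (\<lambda>xs. xs @ [s]) (\<Union>t\<in>I. altseq k n r t)" by (auto simp: inj_on_def)
  have disj: "\<forall>i\<in>I. \<forall>j\<in>I. i \<noteq> j \<longrightarrow> altseq k n r i \<inter> altseq k n r j = {}"
  proof (intro ballI impI)
    fix i j :: nat assume ij: "i \<noteq> j"
    show "altseq k n r i \<inter> altseq k n r j = {}"
    proof (rule equals0I)
      fix xs assume "xs \<in> altseq k n r i \<inter> altseq k n r j"
      then have "xs!(n-1) = i" "xs!(n-1) = j" unfolding altseq_def by simp_all
      then show False using ij by simp
    qed
  qed
  have "GF (altseq k (Suc n) r s) (wAV A V) = (\<Sum>ys\<in>(\<lambda>xs. xs@[s]) ` (\<Union>t\<in>I. altseq k n r t). wAV A V ys)"
    unfolding GF_def altseq_snoc[OF assms] I_def ..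
  also have "\<dots> = (\<Sum>xs\<in>(\<Union>t\<in>I. altseq k n r t). wAV A V (xs@[s]))"
    using sum.reindex[OF inj, of "wAV A V"] by (simp add: comp_def)
  also have "\<dots> = (\<Sum>t\<in>I. \<Sum>xs\<in>altseq k n r t. wAV A V (xs@[s]))"
    by (rule sum.UNION_disjoint) (auto simp: altseq_finite I_def disj)
  also have "\<dots> = (\<Sum>t\<in>I. \<Sum>xs\<in>altseq k n r t. wAV A V xs * w)"
  proof (intro sum.cong refl)
    fix t xs assume "xs \<in> altseq k n r t"
    then have "length xs = n" unfolding altseq_def by simp
    then show "wAV A V (xs@[s]) = wAV A V xs * w" by (simp add: wAV_snoc w_def)
  qed
  also have "\<dots> = w * (\<Sum>t\<in>I. GF (altseq k n r t) (wAV A V))"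
    by (simp add: GF_def sum_distrib_left sum_distrib_right mult.commute)
  finally show ?thesis by (simp add: I_def w_def)
qed


definition cc :: "(nat \<Rightarrow> 'a::comm_ring_1) \<Rightarrow> (nat \<Rightarrow> 'a) \<Rightarrow> nat \<Rightarrow> 'a" where
  "cc A V m = (if odd m then V ((m+1) div 2) else A (m div 2))"

lemma Qp_cont: "Qp A V n = cont (cc A V) n"
proof (induction A V n rule: Qp.induct)
  case (1 A V) then show ?case by simp
next
  case (2 A V) then show ?case by (simp add: cc_def lx_def)
next
  case (3 A V n)
  have "cc A V (Suc (Suc n)) = (if even (Suc n) then V ((Suc n + 2) div 2) else A ((Suc n + 1) div 2))"
    unfolding cc_def by auto
  then show ?case using 3 by (simp add: lx_def)
qed

lemma QT_cont: "QT t A V m = cont (\<lambda>i. cc A V (i + 2*t)) m"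
  unfolding QT_def Qp_cont
  by (rule cont_cong) (auto simp: cc_def ac_simps elim!: oddE evenE)

lemma QTR_cont:
  assumes "1 \<le> s" "s \<le> k"
  shows "QTR (s-1) (k-s+1) A V (2*k+1-2*s) = cont (\<lambda>i. cc A V (i + (2*s-1))) (2*k+1-2*s)"
proof -
  have "QTR (s-1) (k-s+1) A V (2*k+1-2*s) = cont (\<lambda>i. cc A V (2*k+1-i)) (2*k+1-2*s)"
    unfolding QTR_def Qp_cont
  proof (rule cont_cong)
    fix i assume i: "1 \<le> i" "i \<le> 2*k+1-2*s"
    show "cc (\<lambda>i. V (k - s + 1 + 1 - i + (s - 1))) (\<lambda>i. A (k - s + 1 + 1 - i + (s - 1))) i = cc A V (2*k+1-i)"
    proof (cases "odd i")
      case True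
      then obtain j where j: "i = 2*j+1" by (elim oddE)
      have jk: "j + s \<le> k" using j i assms by simp
      have e1: "2*k+1-i = 2*(k-j)" using j jk by simp
      have o: "\<not> odd (2*k+1-i)" unfolding e1 by simp
      have d: "(2*k+1-i) div 2 = k - j" unfolding e1 by simp
      have d2: "(i+1) div 2 = j+1" using j by simp
      have "k - s + 1 + 1 - (j+1) + (s - 1) = k - j" using jk assms by simp
      then show ?thesis unfolding cc_def using True o d d2 by simp
    next
      case False
      then have "even i" by simp
      then obtain j where j: "i = 2*j" by (elim evenE)
      have jk: "j + s \<le> k" "1 \<le> j" using j i assms by simp_all
      have e1: "2*k+1-i = 2*(k-j)+1" using j jk by simp
      have o: "odd (2*k+1-i)" unfolding e1 by simp
      have d: "(2*k+1-i+1) div 2 = k - j + 1" unfolding e1 by simp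
      have d2: "i div 2 = j" using j by simp
      have "k - s + 1 + 1 - j + (s - 1) = k - j + 1" using jk assms by simp
      then show ?thesis unfolding cc_def using False o d d2 by simp
    qed
  qed
  also have "\<dots> = cont (\<lambda>i. (\<lambda>i. cc A V (i + (2*s-1))) ((2*k+1-2*s)+1-i)) (2*k+1-2*s)"
    by (rule cont_cong) (use assms in auto)
  also have "\<dots> = cont (\<lambda>i. cc A V (i + (2*s-1))) (2*k+1-2*s)" by (rule cont_rev)
  finally show ?thesis .
qed


context
  fixes A V :: "nat \<Rightarrow> 'a::comm_ring_1" and k r :: nat
  assumes r1: "1 \<le> r" and rk: "r \<le> k"
begin

definition Lc :: "nat \<Rightarrow> 'a poly" where "Lc n = cont (cc A V) n"
definition Tc :: "nat \<Rightarrow> 'a poly" where "Tc j = cont (\<lambda>i. cc A V (i + j)) (2*k - j)"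
definition Dc :: "'a poly" where "Dc = Lc (2*k)"
definition Yc :: "nat \<Rightarrow> 'a poly" where
  "Yc m = (if m = 0 \<or> 2*k < m then 0 else if m \<le> 2*r-1 then Lc (m-1) * Tc (2*r-1) else Lc (2*r-2) * Tc m)"

lemma L_rec: "2 \<le> m \<Longrightarrow> Lc m = lx (cc A V m) * Lc (m-1) - Lc (m-2)"
proof -
  assume "2 \<le> m"
  then obtain j where j: "m = Suc (Suc j)" by (metis add_2_eq_Suc le_Suc_ex)
  show ?thesis unfolding Lc_def j by simp
qed

lemma L1: "Lc 1 = lx (cc A V 1)" unfolding Lc_def by simp
lemma L0: "Lc 0 = 1" unfolding Lc_def by simp

lemma T_rec: "j + 2 \<le> 2*k \<Longrightarrow> Tc j = lx (cc A V (j+1)) * Tc (j+1) - Tc (j+2)"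
proof -
  assume a: "j + 2 \<le> 2*k"
  define m where "m = 2*k - j - 2"
  have m1: "2*k - j = Suc (Suc m)" "2*k - (j+1) = Suc m" "2*k - (j+2) = m" using a by (auto simp: m_def)
  have "Tc j = lx (cc A V (1+j)) * cont (\<lambda>i. cc A V (i+1+j)) (Suc m) - cont (\<lambda>i. cc A V (i+2+j)) m"
    unfolding Tc_def m1 by (rule cont_back)
  then show ?thesis unfolding Tc_def m1 by (simp add: ac_simps)
qed

lemma T_top: "Tc (2*k) = 1" unfolding Tc_def by simp

lemma T_top1: "Tc (2*k-1) = lx (cc A V (2*k))"
proof -
  have "2*k - (2*k-1) = Suc 0" using r1 rk by simp
  then show ?thesis unfolding Tc_def using r1 rk by simp
qed

lemma D_split: "Dc = Lc (2*r-1) * Tc (2*r-1) - Lc (2*r-2) * Tc (2*r)"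
proof -
  have "cont (cc A V) (2*k) = cont (cc A V) (2*r-1) * cont (\<lambda>i. cc A V (i+(2*r-1))) (2*k-(2*r-1))
     - cont (cc A V) (2*r-1-1) * cont (\<lambda>i. cc A V (i+(2*r-1+1))) (2*k-(2*r-1+1))"
    by (rule cont_split) (use r1 rk in auto)
  moreover have "2*r-1-1 = 2*r-2" "2*r-1+1 = 2*r" using r1 by auto
  ultimately show ?thesis unfolding Dc_def Lc_def Tc_def by simp
qed

lemma tri:
  assumes m: "1 \<le> m" "m \<le> 2*k"
  shows "Yc (m+1) + Yc (m-1) = lx (cc A V m) * Yc m - (if m = 2*r-1 then Dc else 0)"
proof -
  consider "m < 2*r-1" | "m = 2*r-1" | "2*r-1 < m" by linarith
  then show ?thesis
  proof cases
    case 1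
    have y1: "Yc (m+1) = Lc m * Tc (2*r-1)" using 1 m using r1 rk by (auto simp: Yc_def numeral_2_eq_2)
    have y2: "Yc m = Lc (m-1) * Tc (2*r-1)" using 1 m using r1 rk by (auto simp: Yc_def numeral_2_eq_2)
    show ?thesis
    proof (cases "m = 1")
      case True
      have "Yc 0 = 0" using r1 rk by (auto simp: Yc_def numeral_2_eq_2)
      then show ?thesis unfolding y1 y2 using True 1 L1 by (simp add: L0)
    next
      case False
      have y3: "Yc (m-1) = Lc (m-2) * Tc (2*r-1)" using 1 m False using r1 rk by (auto simp: Yc_def numeral_2_eq_2)
      have Lm: "Lc m = lx (cc A V m) * Lc (m-1) - Lc (m-2)" using m False by (intro L_rec) simp
      show ?thesis using 1 unfolding y1 y2 y3 Lm by (simp add: algebra_simps)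
    qed
  next
    case 2
    have y1: "Yc (m+1) = Lc (2*r-2) * Tc (2*r)" using 2 m r1 using r1 rk by (auto simp: Yc_def numeral_2_eq_2)
    have y2: "Yc m = Lc (2*r-2) * Tc (2*r-1)" using 2 m using r1 rk by (auto simp: Yc_def numeral_2_eq_2)
    show ?thesis
    proof (cases "r = 1")
      case True
      have m0: "m - 1 = 0" "2*r-1 = 1" "2*r-2 = 0" using 2 True by auto
      have y3: "Yc (m-1) = 0" unfolding m0 by (simp add: Yc_def)
      have Lm: "Lc (2*r-1) = lx (cc A V m) * Lc (2*r-2)" unfolding m0 using 2 m0 L1 by (simp add: L0)
      show ?thesis unfolding y1 y2 y3 D_split Lm using 2 by (simp add: algebra_simps)
    next
      case False
      have y3: "Yc (m-1) = Lc (2*r-3) * Tc (2*r-1)" using 2 m False r1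
        using rk by (auto simp: Yc_def numeral_3_eq_3)
      have "Lc (2*r-1) = lx (cc A V (2*r-1)) * Lc (2*r-1-1) - Lc (2*r-1-2)" using False r1 by (intro L_rec) simp
      moreover have "2*r-1-1 = 2*r-2" "2*r-1-2 = 2*r-3" by auto
      ultimately have Lm: "Lc (2*r-1) = lx (cc A V m) * Lc (2*r-2) - Lc (2*r-3)" using 2 by simp
      show ?thesis unfolding y1 y2 y3 D_split Lm using 2 by (simp add: algebra_simps)
    qed
  next
    case 3
    have y2: "Yc m = Lc (2*r-2) * Tc m" using 3 m using r1 rk by (auto simp: Yc_def numeral_2_eq_2)
    have y3: "Yc (m-1) = Lc (2*r-2) * Tc (m-1)"
    proof (cases "m - 1 = 2*r-1")
      case True then show ?thesis using m r1 using r1 rk by (auto simp: Yc_def numeral_2_eq_2)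
    next
      case False then show ?thesis using 3 m using r1 rk by (auto simp: Yc_def numeral_2_eq_2)
    qed
    show ?thesis
    proof (cases "m = 2*k")
      case True
      have y1: "Yc (m+1) = 0" using True using r1 rk by (auto simp: Yc_def numeral_2_eq_2)
      have Tm: "Tc (m-1) = lx (cc A V m) * Tc m" using True T_top T_top1 by simp
      show ?thesis unfolding y1 y2 y3 Tm using 3 by (simp add: algebra_simps)
    next
      case False
      have y1: "Yc (m+1) = Lc (2*r-2) * Tc (m+1)" using 3 m False using r1 rk by (auto simp: Yc_def numeral_2_eq_2)
      have "Tc (m-1) = lx (cc A V (m-1+1)) * Tc (m-1+1) - Tc (m-1+2)" using m False by (intro T_rec) simp
      moreover have "m-1+1 = m" "m-1+2 = m+1" using m by auto
      ultimately have Tm: "Tc (m-1) = lx (cc A V m) * Tc m - Tc (m+1)" by simp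
      show ?thesis unfolding y1 y2 y3 Tm using 3 by (simp add: algebra_simps)
    qed
  qed
qed


definition sg :: "nat \<Rightarrow> 'a" where "sg s = (-1)^(r+s+1)"
definition SP :: "nat \<Rightarrow> 'a poly" where "SP t = smult (sg t * V r) (Yc (2*t))"
definition TR :: "nat \<Rightarrow> 'a poly" where "TR s = smult (sg s * V r) (Yc (2*s-1))"

definition Pp :: "nat \<Rightarrow> 'a poly" where
  "Pp s = (if r < s then
        smult ((-1)^(r+s+1) * V r * V s) ([:0,1:] * Qp A V (2*r-2) * QTR (s-1) (k-s+1) A V (2*k+1-2*s))
      else if r = s then
        smult (V r) (Qp A V (2*k))
          - smult ((V r)^2) ([:0,1:] * Qp A V (2*r-2) * QTR (r-1) (k-r+1) A V (2*k+1-2*r))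
      else
        smult ((-1)^(r+s+1) * V r * V s) ([:0,1:] * Qp A V (2*s-2) * QTR (r-1) (k-r+1) A V (2*k+1-2*r)))"

definition Rp :: "nat \<Rightarrow> 'a poly" where
  "Rp s = (if r \<le> s then
        smult ((-1)^(r+s+1) * V r * A s) ([:0,1:] * Qp A V (2*r-2) * QT s A V (2*k-2*s))
      else
        smult ((-1)^(r+s+1) * V r * A s) ([:0,1:] * Qp A V (2*s-1) * QTR (r-1) (k-r+1) A V (2*k+1-2*r)))"

lemma Qp_L: "Qp A V n = Lc n" unfolding Lc_def Qp_cont ..

lemma QTR_T: "1 \<le> s \<Longrightarrow> s \<le> k \<Longrightarrow> QTR (s-1) (k-s+1) A V (2*k+1-2*s) = Tc (2*s-1)"
proof -
  assume a: "1 \<le> s" "s \<le> k"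
  have "2*k - (2*s-1) = 2*k+1-2*s" using a by simp
  then show ?thesis unfolding QTR_cont[OF a] Tc_def by simp
qed

lemma Dc_Q: "Dc = Qp A V (2*k)" unfolding Dc_def Qp_L ..

lemma QT_T: "QT s A V (2*k-2*s) = Tc (2*s)"
  unfolding QT_cont Tc_def ..

lemma sg_r: "sg r = -1"
proof -
  have "odd (r+r+1)" by simp
  then show ?thesis unfolding sg_def by (rule neg_one_odd_power)
qed

lemma sg_Suc: "sg (Suc s) = - sg s" unfolding sg_def by simp

lemma P_form:
  assumes s: "1 \<le> s" "s \<le> k"
  shows "Pp s = (if r = s then smult (V r) Dc else 0) + lx (V s) * TR s"
proof -
  consider "r < s" | "r = s" | "s < r" by linarith
  then show ?thesis
  proof cases
    case 1
    have y: "Yc (2*s-1) = Lc (2*r-2) * Tc (2*s-1)" using 1 s by (auto simp: Yc_def numeral_2_eq_2)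
    show ?thesis using 1 unfolding Pp_def TR_def y Qp_L QTR_T[OF s] sg_def
      by (simp add: lx_def ac_simps)
  next
    case 2
    have sr: "s = r" using 2 by simp
    have y: "Yc (2*r-1) = Lc (2*r-2) * Tc (2*r-1)" using r1 rk by (auto simp: Yc_def numeral_2_eq_2)
    show ?thesis unfolding sr Pp_def TR_def y Qp_L QTR_T[OF r1 rk] Dc_def
      by (simp add: lx_def sg_r power2_eq_square ac_simps)
  next
    case 3
    have y: "Yc (2*s-1) = Lc (2*s-2) * Tc (2*r-1)" using 3 s by (auto simp: Yc_def numeral_2_eq_2)
    show ?thesis using 3 unfolding Pp_def TR_def y Qp_L QTR_T[OF r1 rk] sg_def
      by (simp add: lx_def ac_simps)
  qed
qed

lemma R_form:
  assumes s: "1 \<le> s" "s \<le> k"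
  shows "Rp s = lx (A s) * SP s"
proof (cases "r \<le> s")
  case True
  have y: "Yc (2*s) = Lc (2*r-2) * Tc (2*s)" using True s r1 by (auto simp: Yc_def numeral_2_eq_2)
  show ?thesis using True unfolding Rp_def SP_def y Qp_L QT_T sg_def
    by (simp add: lx_def ac_simps)
next
  case False
  have y: "Yc (2*s) = Lc (2*s-1) * Tc (2*r-1)" using False s by (auto simp: Yc_def numeral_2_eq_2)
  show ?thesis using False unfolding Rp_def SP_def y Qp_L QTR_T[OF r1 rk] sg_def
    by (simp add: lx_def ac_simps)
qed


lemma cc_odd: "1 \<le> s \<Longrightarrow> cc A V (2*s-1) = V s"
proof -
  assume "1 \<le> s"
  then obtain j where j: "s = Suc j" by (cases s) auto
  show ?thesis unfolding cc_def j by simp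
qed

lemma cc_even: "cc A V (2*s) = A s" unfolding cc_def by simp

lemma I3:
  assumes s: "1 \<le> s" "s \<le> k"
  shows "Pp s = SP s - SP (s-1)"
proof -
  obtain j where j: "s = Suc j" using s by (cases s) auto
  have sg1: "sg (s-1) = - sg s" unfolding j using sg_Suc[of j] by simp
  have e: "2*(s-1) = 2*s-1-1" "2*s = 2*s-1+1" using s by auto
  have t: "Yc (2*s-1+1) + Yc (2*s-1-1) = lx (cc A V (2*s-1)) * Yc (2*s-1) - (if 2*s-1 = 2*r-1 then Dc else 0)"
    by (rule tri) (use s in auto)
  have t': "Yc (2*s) + Yc (2*(s-1)) = lx (V s) * Yc (2*s-1) - (if s = r then Dc else 0)"
    using t unfolding e[symmetric] cc_odd[OF s(1)] using s r1 by auto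
  have "SP s - SP (s-1) = smult (sg s * V r) (Yc (2*s) + Yc (2*(s-1)))"
    unfolding SP_def sg1 by (simp add: smult_add_right)
  also have "\<dots> = smult (sg s * V r) (lx (V s) * Yc (2*s-1)) - smult (sg s * V r) (if s = r then Dc else 0)"
    unfolding t' by (simp add: smult_diff_right)
  also have "\<dots> = Pp s"
  proof (cases "s = r")
    case True
    have sr: "s = r" using True .
    show ?thesis unfolding P_form[OF s] TR_def unfolding sr by (simp add: sg_r)
  next
    case False
    then show ?thesis unfolding P_form[OF s] TR_def by simp
  qed
  finally show ?thesis by simp
qed

lemma I4:
  assumes s: "1 \<le> s" "s \<le> k"
  shows "Rp s = TR s - TR (s+1)"
proof -
  have e: "2*(s+1)-1 = 2*s+1" by simp
  have t: "Yc (2*s+1) + Yc (2*s-1) = lx (cc A V (2*s)) * Yc (2*s) - (if 2*s = 2*r-1 then Dc else 0)"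
    by (rule tri) (use s in auto)
  have ne: "2*s \<noteq> 2*r-1" using r1 by presburger
  have "TR s - TR (s+1) = smult (sg s * V r) (Yc (2*s+1) + Yc (2*s-1))"
    unfolding TR_def e using sg_Suc[of s] by (simp add: smult_add_right)
  also have "\<dots> = Rp s"
    unfolding t R_form[OF s] SP_def cc_even using ne by simp
  finally show ?thesis by simp
qed

lemma sumP: "t \<le> k \<Longrightarrow> (\<Sum>u\<in>{1..t}. Pp u) = SP t"
proof (induction t)
  case 0
  then show ?case by (simp add: SP_def Yc_def)
next
  case (Suc t)
  have "(\<Sum>u\<in>{1..Suc t}. Pp u) = (\<Sum>u\<in>{1..t}. Pp u) + Pp (Suc t)" by simp
  also have "\<dots> = SP t + (SP (Suc t) - SP t)" using Suc I3[of "Suc t"] by simp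
  finally show ?case by simp
qed

lemma sumR_aux: "\<forall>s. 1 \<le> s \<longrightarrow> s + d = k + 1 \<longrightarrow> (\<Sum>t\<in>{s..k}. Rp t) = TR s"
proof (induction d)
  case 0
  show ?case
  proof (intro allI impI)
    fix s assume "1 \<le> s" "s + 0 = k + 1"
    then have "s = Suc k" by simp
    then show "(\<Sum>t\<in>{s..k}. Rp t) = TR s" by (simp add: TR_def Yc_def)
  qed
next
  case (Suc d)
  show ?case
  proof (intro allI impI)
    fix s assume s1: "1 \<le> s" and a: "s + Suc d = k + 1"
    have IH: "(\<Sum>t\<in>{Suc s..k}. Rp t) = TR (Suc s)" using Suc.IH a by simp
    have "(\<Sum>t\<in>{s..k}. Rp t) = Rp s + (\<Sum>t\<in>{Suc s..k}. Rp t)"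
      by (rule sum.atLeast_Suc_atMost) (use a in simp)
    also have "\<dots> = Rp s + TR (Suc s)" using IH by simp
    also have "\<dots> = TR s" using I4[of s] s1 a by simp
    finally show "(\<Sum>t\<in>{s..k}. Rp t) = TR s" .
  qed
qed

lemma sumR: "1 \<le> s \<Longrightarrow> s \<le> k \<Longrightarrow> (\<Sum>t\<in>{s..k}. Rp t) = TR s"
  using sumR_aux[of "k + 1 - s"] by simp

lemma PE1: "1 \<le> t \<Longrightarrow> t \<le> k \<Longrightarrow> Rp t = lx (A t) * (\<Sum>u\<in>{1..t}. Pp u)"
  using R_form[of t] sumP[of t] by simp

lemma PE2: "1 \<le> s \<Longrightarrow> s \<le> k \<Longrightarrow> Pp s = (if r = s then smult (V r) Dc else 0) + lx (V s) * (\<Sum>t\<in>{s..k}. Rp t)"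
  using P_form[of s] sumR[of s] by simp

end


definition Fs :: "nat \<Rightarrow> nat \<Rightarrow> (nat \<Rightarrow> 'a::comm_ring_1) \<Rightarrow> (nat \<Rightarrow> 'a) \<Rightarrow> nat \<Rightarrow> 'a fps" where
  "Fs k r A V s = Abs_fps (\<lambda>m. if even m then GF (altseq k (m + 1) r s) (wAV A V) else 0)"
definition Gs :: "nat \<Rightarrow> nat \<Rightarrow> (nat \<Rightarrow> 'a::comm_ring_1) \<Rightarrow> (nat \<Rightarrow> 'a) \<Rightarrow> nat \<Rightarrow> 'a fps" where
  "Gs k r A V s = Abs_fps (\<lambda>m. if odd m then GF (altseq k (m + 1) r s) (wAV A V) else 0)"

lemma G_sys:
  assumes t: "1 \<le> t" "t \<le> k"
  shows "Gs k r A V t = fps_X * fps_const (A t) * (\<Sum>u\<in>{1..t}. Fs k r A V u)"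
proof (rule fps_ext)
  fix m
  show "Gs k r A V t $ m = (fps_X * fps_const (A t) * (\<Sum>u\<in>{1..t}. Fs k r A V u)) $ m"
  proof (cases m)
    case 0 then show ?thesis by (simp add: Gs_def mult.assoc)
  next
    case (Suc j)
    have rhs: "(fps_X * fps_const (A t) * (\<Sum>u\<in>{1..t}. Fs k r A V u)) $ m
        = A t * (\<Sum>u\<in>{1..t}. (if even j then GF (altseq k (j + 1) r u) (wAV A V) else 0))"
      unfolding Suc by (simp add: mult.assoc fps_sum_nth Fs_def)
    show ?thesis
    proof (cases "even j")
      case True
      have "GF (altseq k (Suc (Suc j)) r t) (wAV A V) = A t * (\<Sum>u\<in>{1..t}. GF (altseq k (Suc j) r u) (wAV A V))"
        using GF_snoc[of "Suc j" t k r A V] t True by simp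
      then show ?thesis unfolding rhs using True by (simp add: Gs_def Suc)
    next
      case False
      then show ?thesis unfolding rhs by (simp add: Gs_def Suc)
    qed
  qed
qed

lemma F_sys:
  assumes r: "1 \<le> r" "r \<le> k" and s: "1 \<le> s" "s \<le> k"
  shows "Fs k r A V s = fps_const (if r = s then V r else 0) + fps_X * fps_const (V s) * (\<Sum>t\<in>{s..k}. Gs k r A V t)"
proof (rule fps_ext)
  fix m
  show "Fs k r A V s $ m = (fps_const (if r = s then V r else 0) + fps_X * fps_const (V s) * (\<Sum>t\<in>{s..k}. Gs k r A V t)) $ m"
  proof (cases m)
    case 0 then show ?thesis using GF_1[OF r, of s A V] by (simp add: Fs_def mult.assoc)
  next
    case (Suc j)
    have rhs: "(fps_const (if r = s then V r else 0) + fps_X * fps_const (V s) * (\<Sum>t\<in>{s..k}. Gs k r A V t)) $ m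
        = V s * (\<Sum>t\<in>{s..k}. (if odd j then GF (altseq k (j + 1) r t) (wAV A V) else 0))"
      unfolding Suc by (simp add: mult.assoc fps_sum_nth Gs_def)
    show ?thesis
    proof (cases "odd j")
      case True
      have "GF (altseq k (Suc (Suc j)) r s) (wAV A V) = V s * (\<Sum>t\<in>{s..k}. GF (altseq k (Suc j) r t) (wAV A V))"
        using GF_snoc[of "Suc j" s k r A V] s True by simp
      then show ?thesis unfolding rhs using True by (simp add: Fs_def Suc)
    next
      case False
      then show ?thesis unfolding rhs by (simp add: Fs_def Suc)
    qed
  qed
qed

lemma sys_unique:
  fixes f g :: "nat \<Rightarrow> 'a::comm_ring_1 fps"
  assumes hg: "\<And>t. 1 \<le> t \<Longrightarrow> t \<le> k \<Longrightarrow> g t = fps_X * fps_const (A t) * (\<Sum>u\<in>{1..t}. f u)"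
    and hf: "\<And>s. 1 \<le> s \<Longrightarrow> s \<le> k \<Longrightarrow> f s = fps_X * fps_const (V s) * (\<Sum>t\<in>{s..k}. g t)"
    and s: "1 \<le> s" "s \<le> k"
  shows "f s = 0 \<and> g s = 0"
proof -
  have main: "\<forall>s. 1 \<le> s \<and> s \<le> k \<longrightarrow> f s $ n = 0 \<and> g s $ n = 0" for n
  proof (induction n rule: less_induct)
    case (less n)
    show ?case
    proof (intro allI impI)
      fix s assume s: "1 \<le> s \<and> s \<le> k"
      have f1: "f s $ n = (if n = 0 then 0 else V s * (\<Sum>t\<in>{s..k}. g t $ (n-1)))"
        using hf[of s] s by (simp add: mult.assoc fps_sum_nth)
      have g1: "g s $ n = (if n = 0 then 0 else A s * (\<Sum>u\<in>{1..s}. f u $ (n-1)))"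
        using hg[of s] s by (simp add: mult.assoc fps_sum_nth)
      show "f s $ n = 0 \<and> g s $ n = 0"
      proof (cases "n = 0")
        case True then show ?thesis using f1 g1 by simp
      next
        case False
        then have lt: "n - 1 < n" by simp
        have a: "(\<Sum>t\<in>{s..k}. g t $ (n-1)) = 0"
          by (rule sum.neutral) (use less.IH[OF lt] s in auto)
        have b: "(\<Sum>u\<in>{1..s}. f u $ (n-1)) = 0"
          by (rule sum.neutral) (use less.IH[OF lt] s in auto)
        show ?thesis using f1 g1 a b False by simp
      qed
    qed
  qed
  show ?thesis using main s by (auto simp: fps_eq_iff)
qed

lemma fps_of_poly_lx: "fps_of_poly (lx a) = fps_X * fps_const a"
  by (rule fps_ext) (auto simp: lx_def coeff_pCons split: nat.splits)


theorem theorem28: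
  fixes A V :: "nat \<Rightarrow> 'a::comm_ring_1" and k r s :: nat
  assumes "1 \<le> r" "r \<le> k" "1 \<le> s" "s \<le> k"
  shows
   "Abs_fps (\<lambda>m. if even m then GF (altseq k (m + 1) r s) (wAV A V) else 0)
      * fps_of_poly (Qp A V (2*k)) =
    fps_of_poly
     (if r < s then
        smult ((-1)^(r+s+1) * V r * V s) ([:0,1:] * Qp A V (2*r-2) * QTR (s-1) (k-s+1) A V (2*k+1-2*s))
      else if r = s then
        smult (V r) (Qp A V (2*k))
          - smult ((V r)^2) ([:0,1:] * Qp A V (2*r-2) * QTR (r-1) (k-r+1) A V (2*k+1-2*r))
      else
        smult ((-1)^(r+s+1) * V r * V s) ([:0,1:] * Qp A V (2*s-2) * QTR (r-1) (k-r+1) A V (2*k+1-2*r)))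
   \<and>
   Abs_fps (\<lambda>m. if odd m then GF (altseq k (m + 1) r s) (wAV A V) else 0)
      * fps_of_poly (Qp A V (2*k)) =
    fps_of_poly
     (if r \<le> s then
        smult ((-1)^(r+s+1) * V r * A s) ([:0,1:] * Qp A V (2*r-2) * QT s A V (2*k-2*s))
      else
        smult ((-1)^(r+s+1) * V r * A s) ([:0,1:] * Qp A V (2*s-1) * QTR (r-1) (k-r+1) A V (2*k+1-2*r)))"
proof -
  note r = assms(1,2)
  define Dp where "Dp = fps_of_poly (Qp A V (2*k))"
  define f where "f u = Fs k r A V u * Dp - fps_of_poly (Pp A V k r u)" for u
  define g where "g t = Gs k r A V t * Dp - fps_of_poly (Rp A V k r t)" for t
  have DcQ: "Dc A V k = Qp A V (2*k)" by (rule Dc_Q[OF r])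
  have hg: "g t = fps_X * fps_const (A t) * (\<Sum>u\<in>{1..t}. f u)" if t: "1 \<le> t" "t \<le> k" for t
    unfolding g_def f_def G_sys[OF t] PE1[OF r t] fps_of_poly_mult fps_of_poly_lx fps_of_poly_sum
    by (simp add: algebra_simps sum_distrib_left sum_distrib_right sum_subtractf)
  have hf: "f u = fps_X * fps_const (V u) * (\<Sum>t\<in>{u..k}. g t)" if u: "1 \<le> u" "u \<le> k" for u
  proof -
    have c: "fps_of_poly (if r = u then smult (V r) (Dc A V k) else 0) = fps_const (if r = u then V r else 0) * Dp"
      unfolding DcQ Dp_def by (simp add: fps_of_poly_smult)
    show ?thesis
      unfolding g_def f_def F_sys[OF r u] PE2[OF r u] fps_of_poly_add fps_of_poly_mult fps_of_poly_lx fps_of_poly_sum c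
      by (simp add: algebra_simps sum_distrib_left sum_distrib_right sum_subtractf)
  qed
  have z: "f s = 0 \<and> g s = 0" by (rule sys_unique[of k g A f V s, OF hg hf]) (use assms in auto)
  then show ?thesis unfolding f_def g_def Fs_def Gs_def Dp_def Pp_def[OF r] Rp_def[OF r] by simp
qed


end
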